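(* Let $S=\langle P,\varphi\rangle$ be a SUT model, $t$ a strength, $N\ge1$ an integer and $lb$ an integer with $0\le lb<CAN(t,S)$ and $lb+1\le N$. Let $m=N-(lb+1)$ be the number of variables $u_i$, and consider the Weighted Partial MaxSAT instance $\Psi$ defined in the context. If $N\ge CAN(t,S)$, the optimal cost of $\Psi$ is $CAN(t,S)-(lb+1)+(|\mathcal T_a|-T(N;t,S))\cdot(m+1)$; otherwise it is $N-(lb+1)+(|\mathcal T_a|-T(N;t,S))\cdot(m+1)$.
   Context: A SUT model is $S=\langle P,\varphi\rangle$, where $P$ is a finite set of parameters, each $p\in P$ having a finite nonempty domain $d(p)$, and $\varphi$ is a propositional formula whose atoms have the form $(p=v)$ with $p\in P$, $v\in d(p)$. A test case is a full assignment $A$ giving each $p$ a value in $d(p)$ such that $\varphi$ is true when each atom $(p=v)$ is read as true iff $A(p)=v$; it is assumed that at least one test case exists. Fix a strength $t$ with $1\le t\le|P|$. A $t$-tuple is an assignment of values to exactly $t$ distinct parameters, viewed as a set of pairs $(p,v)$; a test case covers $\tau$ if it assigns $v$ to $p$ for every $(p,v)\in\tau$. A $t$-tuple is allowed if some test case covers it; $\mathcal T_a$ is the set of allowed $t$-tuples. A covering array $CA(N;t,S)$ is a list of $N$ test cases (repetitions allowed) covering every allowed $t$-tuple; $CAN(t,S)$ is the minimum such $N$. $T(N;t,S)$ is the maximum number of $t$-tuples covered by a list of $N$ test cases. $[N]=\{1,\dots,N\}$. A Weighted Partial MaxSAT instance consists of hard constraints and soft clauses $(c,w)$ with positive integer weights;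 its optimal cost is the minimum, over truth assignments satisfying all hard constraints, of the total weight of falsified soft clauses ($\infty$ if the hard constraints are unsatisfiable). Variables: $x_{i,p,v}$ ($i\in[N]$, $p\in P$, $v\in d(p)$), $c^i_\tau$ ($i\in\{0,\dots,N\}$, $\tau\in\mathcal T_a$), $u_i$ ($i\in\{lb+2,\dots,N\}$). Hard constraints of $\Psi$: (X) for every $i\in[N]$, $p\in P$: exactly one of $\{x_{i,p,v}:v\in d(p)\}$ is true; (SUTX) for every $i\in[N]$: the formula obtained from $\varphi$ by replacing each atom $(p=v)$ with $x_{i,p,v}$; (a) for every $i\in[N]$, $\tau\in\mathcal T_a$, $(p,v)\in\tau$: $c^i_\tau\rightarrow(c^{i-1}_\tau\vee x_{i,p,v})$; (c) for every $\tau\in\mathcal T_a$: $c^N_\tau\rightarrow\neg c^0_\tau$; (BSU) for every $i\in\{lb+2,\dots,N-1\}$: $u_{i+1}\rightarrow u_i$; (CCU) for every $i\in\{lb+2,\dots,N\}$, $\tau\in\mathcal T_a$: $\neg c^{i-1}_\tau\rightarrow u_i$. Soft clauses: $(\neg u_i,1)$ for every $i\in\{lb+2,\dots,N\}$, and $(c^N_\tau,m+1)$ for every $\tau\in\mathcal T_a$. *)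

theory Defs
  imports Main "HOL-Library.FuncSet" "HOL-Library.Extended_Nat"
begin

datatype 'a pform =
    PAtom 'a | PTrue | PFalse | PNot "'a pform"
  | PAnd "'a pform" "'a pform" | POr "'a pform" "'a pform"
  | PImp "'a pform" "'a pform" | PIff "'a pform" "'a pform"

fun peval :: "('a \<Rightarrow> bool) \<Rightarrow> 'a pform \<Rightarrow> bool" where
  "peval I (PAtom a) = I a"
| "peval I PTrue = True"
| "peval I PFalse = False"
| "peval I (PNot f) = (\<not> peval I f)"
| "peval I (PAnd f g) = (peval I f \<and> peval I g)"
| "peval I (POr f g) = (peval I f \<or> peval I g)"
| "peval I (PImp f g) = (peval I f \<longrightarrow> peval I g)"
| "peval I (PIff f g) = (peval I f \<longleftrightarrow> peval I g)"

text \<open>A SUT model is given by a parameter set P, domains d, and a formula phi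
  whose atoms are pairs (p,v) standing for the atom (p = v).\<close>

definition sut_model :: "'p set \<Rightarrow> ('p \<Rightarrow> 'v set) \<Rightarrow> ('p \<times> 'v) pform \<Rightarrow> bool" where
  "sut_model P d phi \<longleftrightarrow> finite P \<and> (\<forall>p\<in>P. finite (d p) \<and> d p \<noteq> {})
     \<and> set_pform phi \<subseteq> Sigma P d"

definition test_cases :: "'p set \<Rightarrow> ('p \<Rightarrow> 'v set) \<Rightarrow> ('p \<times> 'v) pform \<Rightarrow> ('p \<Rightarrow> 'v) set" where
  "test_cases P d phi = {A \<in> PiE P d. peval (\<lambda>(p, v). A p = v) phi}"

definition is_tuple :: "'p set \<Rightarrow> ('p \<Rightarrow> 'v set) \<Rightarrow> nat \<Rightarrow> ('p \<times> 'v) set \<Rightarrow> bool" where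
  "is_tuple P d t tau \<longleftrightarrow> finite tau \<and> tau \<subseteq> Sigma P d \<and> inj_on fst tau \<and> card tau = t"

definition covers :: "('p \<Rightarrow> 'v) \<Rightarrow> ('p \<times> 'v) set \<Rightarrow> bool" where
  "covers A tau \<longleftrightarrow> (\<forall>(p, v)\<in>tau. A p = v)"

definition allowed_tuples :: "'p set \<Rightarrow> ('p \<Rightarrow> 'v set) \<Rightarrow> ('p \<times> 'v) pform \<Rightarrow> nat \<Rightarrow> ('p \<times> 'v) set set" where
  "allowed_tuples P d phi t = {tau. is_tuple P d t tau \<and> (\<exists>A\<in>test_cases P d phi. covers A tau)}"

definition is_CA :: "'p set \<Rightarrow> ('p \<Rightarrow> 'v set) \<Rightarrow> ('p \<times> 'v) pform \<Rightarrow> nat \<Rightarrow> ('p \<Rightarrow> 'v) list \<Rightarrow> bool" where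
  "is_CA P d phi t L \<longleftrightarrow> set L \<subseteq> test_cases P d phi
     \<and> (\<forall>tau\<in>allowed_tuples P d phi t. \<exists>A\<in>set L. covers A tau)"

definition CAN :: "'p set \<Rightarrow> ('p \<Rightarrow> 'v set) \<Rightarrow> ('p \<times> 'v) pform \<Rightarrow> nat \<Rightarrow> nat" where
  "CAN P d phi t = (LEAST N. \<exists>L. length L = N \<and> is_CA P d phi t L)"

definition Tcov :: "'p set \<Rightarrow> ('p \<Rightarrow> 'v set) \<Rightarrow> ('p \<times> 'v) pform \<Rightarrow> nat \<Rightarrow> nat \<Rightarrow> nat" where
  "Tcov P d phi t N = Max {card {tau. is_tuple P d t tau \<and> (\<exists>A\<in>set L. covers A tau)} | L.
       length L = N \<and> set L \<subseteq> test_cases P d phi}"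

text \<open>Optimal cost is infinity if the
  hard constraints are unsatisfiable (Inf of the empty set in enat).\<close>
definition wpms_cost :: "(('x \<Rightarrow> bool) \<Rightarrow> bool) set \<Rightarrow> ((('x \<Rightarrow> bool) \<Rightarrow> bool) \<times> nat) set \<Rightarrow> enat" where
  "wpms_cost H S = (INF sigma \<in> {sigma. \<forall>h\<in>H. h sigma}.
       enat (\<Sum>cw\<in>{cw\<in>S. \<not> fst cw sigma}. snd cw))"

datatype ('p, 'v) var = X nat 'p 'v | C nat "('p \<times> 'v) set" | U nat

definition Psi_hard :: "'p set \<Rightarrow> ('p \<Rightarrow> 'v set) \<Rightarrow> ('p \<times> 'v) pform \<Rightarrow> nat \<Rightarrow> nat \<Rightarrow> nat
    \<Rightarrow> ((('p, 'v) var \<Rightarrow> bool) \<Rightarrow> bool) set" where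
  "Psi_hard P d phi t N lb =
     \<comment> \<open>(X)\<close>
     {(\<lambda>s. \<exists>!v. v \<in> d p \<and> s (X i p v)) | i p. i \<in> {1..N} \<and> p \<in> P}
     \<comment> \<open>(SUTX)\<close>
   \<union> {(\<lambda>s. peval (\<lambda>(p, v). s (X i p v)) phi) | i. i \<in> {1..N}}
     \<comment> \<open>(a)\<close>
   \<union> {(\<lambda>s. s (C i tau) \<longrightarrow> s (C (i - 1) tau) \<or> s (X i p v)) | i tau p v.
        i \<in> {1..N} \<and> tau \<in> allowed_tuples P d phi t \<and> (p, v) \<in> tau}
     \<comment> \<open>(c)\<close>
   \<union> {(\<lambda>s. s (C N tau) \<longrightarrow> \<not> s (C 0 tau)) | tau. tau \<in> allowed_tuples P d phi t}
     \<comment> \<open>(BSU)\<close>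
   \<union> {(\<lambda>s. s (U (i + 1)) \<longrightarrow> s (U i)) | i. i \<in> {lb + 2..N - 1}}
     \<comment> \<open>(CCU)\<close>
   \<union> {(\<lambda>s. \<not> s (C (i - 1) tau) \<longrightarrow> s (U i)) | i tau.
        i \<in> {lb + 2..N} \<and> tau \<in> allowed_tuples P d phi t}"

definition Psi_soft :: "'p set \<Rightarrow> ('p \<Rightarrow> 'v set) \<Rightarrow> ('p \<times> 'v) pform \<Rightarrow> nat \<Rightarrow> nat \<Rightarrow> nat
    \<Rightarrow> (((('p, 'v) var \<Rightarrow> bool) \<Rightarrow> bool) \<times> nat) set" where
  "Psi_soft P d phi t N lb =
     {((\<lambda>s. \<not> s (U i)), 1) | i. i \<in> {lb + 2..N}}
   \<union> {((\<lambda>s. s (C N tau)), N - (lb + 1) + 1) | tau. tau \<in> allowed_tuples P d phi t}"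

end

theory Submission
  imports Defs
begin

lemma peval_cong: "(\<forall>a\<in>set_pform f. I a = J a) \<Longrightarrow> peval I f = peval J f"
  by (induction f) auto

definition covset :: "'p set \<Rightarrow> ('p \<Rightarrow> 'v set) \<Rightarrow> nat \<Rightarrow> ('p \<Rightarrow> 'v) list \<Rightarrow> ('p \<times> 'v) set set" where
  "covset P d t L = {tau. is_tuple P d t tau \<and> (\<exists>A\<in>set L. covers A tau)}"

locale sutm =
  fixes P :: "'p set" and d :: "'p \<Rightarrow> 'v set" and phi :: "('p \<times> 'v) pform" and t :: nat
  assumes sut: "sut_model P d phi" and ne: "test_cases P d phi \<noteq> {}"
begin

abbreviation "TC \<equiv> test_cases P d phi"
abbreviation "Ta \<equiv> allowed_tuples P d phi t"
abbreviation "cov \<equiv> covset P d t"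
abbreviation "can \<equiv> CAN P d phi t"
abbreviation "TN \<equiv> Tcov P d phi t"

lemma fin_Sigma: "finite (Sigma P d)"
  using sut unfolding sut_model_def by auto

lemma fin_Ta: "finite Ta"
proof -
  have "Ta \<subseteq> Pow (Sigma P d)" unfolding allowed_tuples_def is_tuple_def by auto
  thus ?thesis by (rule finite_subset) (simp add: fin_Sigma)
qed

lemma fin_TC: "finite TC"
proof -
  have "TC \<subseteq> PiE P d" unfolding test_cases_def by auto
  moreover have "finite (PiE P d)" using sut unfolding sut_model_def by (intro finite_PiE) auto
  ultimately show ?thesis using finite_subset by blast
qed

lemma covset_sub: "set L \<subseteq> TC \<Longrightarrow> cov L \<subseteq> Ta"
  unfolding covset_def allowed_tuples_def by auto

lemma covset_mono: "set L \<subseteq> set L' \<Longrightarrow> cov L \<subseteq> cov L'"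
  unfolding covset_def by auto

lemma isCA_iff: "set L \<subseteq> TC \<Longrightarrow> is_CA P d phi t L \<longleftrightarrow> Ta \<subseteq> cov L"
  unfolding is_CA_def covset_def allowed_tuples_def by auto

lemma card_cov_le: "set L \<subseteq> TC \<Longrightarrow> card (cov L) \<le> card Ta"
  by (rule card_mono[OF fin_Ta covset_sub])

lemma CA_ex: "\<exists>L. is_CA P d phi t L"
proof -
  obtain L where L: "set L = TC" using fin_TC finite_list by blast
  have "Ta \<subseteq> cov L" unfolding covset_def allowed_tuples_def using L by auto
  thus ?thesis using isCA_iff[of L] L by (intro exI[of _ L]) simp
qed

lemma CAN_wit: "\<exists>L. length L = can \<and> is_CA P d phi t L"
proof -
  obtain L where "is_CA P d phi t L" using CA_ex by blast
  hence "\<exists>N L. length L = N \<and> is_CA P d phi t L" by blast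
  thus ?thesis unfolding CAN_def by (rule LeastI_ex)
qed

lemma CAN_le: "is_CA P d phi t L \<Longrightarrow> can \<le> length L"
  unfolding CAN_def by (rule Least_le) blast

definition "Tset N = {card (cov L) | L. length L = N \<and> set L \<subseteq> TC}"

lemma Tcov_eq: "TN N = Max (Tset N)"
  unfolding Tcov_def Tset_def covset_def by simp

lemma Tset_fin: "finite (Tset N)"
proof -
  have "Tset N \<subseteq> {0..card Ta}"
    unfolding Tset_def using card_cov_le by auto
  thus ?thesis by (rule finite_subset) simp
qed

lemma Tset_ne: "Tset N \<noteq> {}"
proof -
  obtain A where "A \<in> TC" using ne by blast
  hence "card (cov (replicate N A)) \<in> Tset N" unfolding Tset_def by auto
  thus ?thesis by blast
qed

lemma L1: "length L = N \<Longrightarrow> set L \<subseteq> TC \<Longrightarrow> card (cov L) \<le> TN N"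
  unfolding Tcov_eq using Tset_fin by (intro Max_ge) (auto simp: Tset_def)

lemma L4: "TN N \<le> card Ta"
proof -
  have "TN N \<in> Tset N" unfolding Tcov_eq using Tset_fin Tset_ne by (rule Max_in)
  thus ?thesis unfolding Tset_def using card_cov_le by auto
qed

lemma L5: "\<exists>L. length L = N \<and> set L \<subseteq> TC \<and> card (cov L) = TN N
   \<and> (can \<le> N \<longrightarrow> Ta \<subseteq> cov (take can L))"
proof (cases "can \<le> N")
  case True
  obtain L0 where L0: "length L0 = can" "is_CA P d phi t L0" using CAN_wit by blast
  obtain A where A: "A \<in> TC" using ne by blast
  define L where "L = L0 @ replicate (N - can) A"
  have len: "length L = N" using L0 True by (simp add: L_def)
  have sub: "set L \<subseteq> TC" using L0 A unfolding L_def is_CA_def by auto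
  have tk: "take can L = L0" using L0 by (simp add: L_def)
  have full: "Ta \<subseteq> cov (take can L)" using tk L0 isCA_iff is_CA_def by metis
  have "cov (take can L) \<subseteq> cov L" by (rule covset_mono) (meson set_take_subset)
  hence "cov L = Ta" using full covset_sub[OF sub] by blast
  hence "card (cov L) = TN N" using L1[OF len sub] L4[of N] by simp
  thus ?thesis using len sub full by blast
next
  case False
  have "TN N \<in> Tset N" unfolding Tcov_eq using Tset_fin Tset_ne by (rule Max_in)
  then obtain L where "length L = N" "set L \<subseteq> TC" "card (cov L) = TN N"
    unfolding Tset_def by auto
  thus ?thesis using False by blast
qed

lemma TN_full: "can \<le> N \<Longrightarrow> TN N = card Ta"
proof -
  assume "can \<le> N"
  then obtain L where L: "length L = N" "set L \<subseteq> TC" "card (cov L) = TN N"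
    "Ta \<subseteq> cov (take can L)" using L5 by blast
  have "cov (take can L) \<subseteq> cov L" by (rule covset_mono) (meson set_take_subset)
  hence "cov L = Ta" using L covset_sub by blast
  thus ?thesis using L by simp
qed

lemma L2:
  assumes "length L = j" "j < N" "j < can" "set L \<subseteq> TC"
  shows "card (cov L) + 1 \<le> TN N"
proof -
  have "\<not> is_CA P d phi t L" using CAN_le assms by fastforce
  then obtain tau where tau: "tau \<in> Ta" "tau \<notin> cov L" using isCA_iff assms(4) by blast
  then obtain A where A: "A \<in> TC" "covers A tau" unfolding allowed_tuples_def by auto
  define L' where "L' = L @ replicate (N - j) A"
  have len: "length L' = N" using assms by (simp add: L'_def)
  have sub: "set L' \<subseteq> TC" using assms A by (auto simp: L'_def)
  have "insert tau (cov L) \<subseteq> cov L'"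
    using tau A assms unfolding L'_def covset_def allowed_tuples_def by auto
  hence "card (insert tau (cov L)) \<le> card (cov L')"
    using covset_sub[OF sub] fin_Ta by (meson card_mono finite_subset)
  moreover have "card (insert tau (cov L)) = card (cov L) + 1"
    using tau covset_sub[OF assms(4)] fin_Ta by (simp add: finite_subset)
  ultimately show ?thesis using L1[OF len sub] by linarith
qed

lemma cost_eq:
  "(\<Sum>cw\<in>{cw\<in>Psi_soft P d phi t N lb. \<not> fst cw s}. snd cw) =
     card {i\<in>{lb+2..N}. s (U i)} + (N - (lb+1) + 1) * card {tau\<in>Ta. \<not> s (C N tau)}"
proof -
  define f1 :: "nat \<Rightarrow> ((('p, 'v) var \<Rightarrow> bool) \<Rightarrow> bool) \<times> nat"
    where "f1 i = ((\<lambda>s. \<not> s (U i)), 1)" for i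
  define f2 :: "('p \<times> 'v) set \<Rightarrow> ((('p, 'v) var \<Rightarrow> bool) \<Rightarrow> bool) \<times> nat"
    where "f2 tau = ((\<lambda>s. s (C N tau)), N - (lb + 1) + 1)" for tau
  define A1 where "A1 = {i\<in>{lb+2..N}. s (U i)}"
  define A2 where "A2 = {tau\<in>Ta. \<not> s (C N tau)}"
  have eq: "{cw\<in>Psi_soft P d phi t N lb. \<not> fst cw s} = f1 ` A1 \<union> f2 ` A2"
    unfolding Psi_soft_def f1_def f2_def A1_def A2_def by auto
  have inj1: "inj_on f1 A1"
  proof
    fix i j assume "f1 i = f1 j"
    hence "fst (f1 i) = fst (f1 j)" by simp
    hence "(\<lambda>s::('p, 'v) var \<Rightarrow> bool. \<not> s (U i)) = (\<lambda>s. \<not> s (U j))"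
      unfolding f1_def fst_conv .
    from fun_cong[OF this, of "\<lambda>v. v = U i"] show "i = j" by simp
  qed
  have inj2: "inj_on f2 A2"
  proof
    fix i j assume "f2 i = f2 j"
    hence "fst (f2 i) = fst (f2 j)" by simp
    hence "(\<lambda>s::('p, 'v) var \<Rightarrow> bool. s (C N i)) = (\<lambda>s. s (C N j))"
      unfolding f2_def fst_conv .
    from fun_cong[OF this, of "\<lambda>v. v = C N i"] show "i = j" by simp
  qed
  have disj: "f1 ` A1 \<inter> f2 ` A2 = {}"
  proof (rule ccontr)
    assume "f1 ` A1 \<inter> f2 ` A2 \<noteq> {}"
    then obtain i tau where "f1 i = f2 tau" by (metis (no_types, lifting) disjoint_iff imageE)
    hence "fst (f1 i) = fst (f2 tau)" by simp
    hence "(\<lambda>s::('p, 'v) var \<Rightarrow> bool. \<not> s (U i)) = (\<lambda>s. s (C N tau))"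
      unfolding f1_def f2_def fst_conv .
    from fun_cong[OF this, of "\<lambda>v. False"] show False by simp
  qed
  have finA1: "finite A1" unfolding A1_def by simp
  have finA2: "finite A2" unfolding A2_def using fin_Ta by simp
  have "(\<Sum>cw\<in>f1 ` A1 \<union> f2 ` A2. snd cw) = (\<Sum>cw\<in>f1 ` A1. snd cw) + (\<Sum>cw\<in>f2 ` A2. snd cw)"
    using disj finA1 finA2 by (intro sum.union_disjoint) auto
  also have "(\<Sum>cw\<in>f1 ` A1. snd cw) = card A1"
    unfolding sum.reindex[OF inj1] by (simp add: f1_def)
  also have "(\<Sum>cw\<in>f2 ` A2. snd cw) = (N - (lb+1) + 1) * card A2"
    unfolding sum.reindex[OF inj2] by (simp add: f2_def)
  finally show ?thesis unfolding eq A1_def A2_def .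
qed

lemma atoms_sub: "a \<in> set_pform phi \<Longrightarrow> a \<in> Sigma P d"
  using sut unfolding sut_model_def by auto

lemma Ta_tuple: "tau \<in> Ta \<Longrightarrow> is_tuple P d t tau"
  unfolding allowed_tuples_def by auto

lemma Ta_Sigma: "tau \<in> Ta \<Longrightarrow> (p, v) \<in> tau \<Longrightarrow> p \<in> P \<and> v \<in> d p"
  unfolding allowed_tuples_def is_tuple_def by auto


definition "costf N lb s = (\<Sum>cw\<in>{cw\<in>Psi_soft P d phi t N lb. \<not> fst cw s}. snd cw)"

lemma witness:
  assumes N1: "1 \<le> N" and lbc: "lb < can" and lbN: "lb + 1 \<le> N"
  shows "\<exists>s. (\<forall>h\<in>Psi_hard P d phi t N lb. h s) \<and>
     costf N lb s = min N can - (lb+1) + (N - (lb+1) + 1) * (card Ta - TN N)"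
proof -
  obtain L where len: "length L = N" and sub: "set L \<subseteq> TC" and cardL: "card (cov L) = TN N"
    and full: "can \<le> N \<longrightarrow> Ta \<subseteq> cov (take can L)" using L5 by blast
  define s where "s v = (case v of X i p w \<Rightarrow> i \<in> {1..N} \<and> p \<in> P \<and> (L!(i-1)) p = w
     | C i tau \<Rightarrow> (i < N \<and> tau \<notin> cov L) \<or> (0 < i \<and> tau \<in> cov (take i L))
     | U i \<Rightarrow> i \<le> can)" for v
  have row: "L!(i-1) \<in> TC" if "i \<in> {1..N}" for i
    using that len sub nth_mem[of "i-1" L] by auto
  have rowPi: "L!(i-1) \<in> PiE P d" if "i \<in> {1..N}" for i
    using row[OF that] unfolding test_cases_def by auto
  have hX: "\<exists>!w. w \<in> d p \<and> s (X i p w)" if "i \<in> {1..N}" "p \<in> P" for i p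
    using rowPi[OF that(1)] that unfolding s_def by (auto simp: PiE_iff)
  have hS: "peval (\<lambda>(p, w). s (X i p w)) phi" if "i \<in> {1..N}" for i
  proof -
    have "peval (\<lambda>(p, w). s (X i p w)) phi = peval (\<lambda>(p, w). (L!(i-1)) p = w) phi"
      by (rule peval_cong) (use that atoms_sub in \<open>auto simp: s_def\<close>)
    also have "\<dots>" using row[OF that] unfolding test_cases_def by auto
    finally show ?thesis .
  qed
  have ha: "s (C i tau) \<longrightarrow> s (C (i - 1) tau) \<or> s (X i p w)"
    if "i \<in> {1..N}" "tau \<in> Ta" "(p, w) \<in> tau" for i tau p w
  proof
    assume Ci: "s (C i tau)"
    show "s (C (i - 1) tau) \<or> s (X i p w)"
    proof (cases "i < N \<and> tau \<notin> cov L")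
      case True thus ?thesis unfolding s_def by auto
    next
      case False
      hence tc: "tau \<in> cov (take i L)" using Ci unfolding s_def by auto
      have tk: "take i L = take (i-1) L @ [L!(i-1)]"
        using that(1) len take_Suc_conv_app_nth[of "i-1" L] by auto
      from tc obtain A where A: "A \<in> set (take i L)" "covers A tau" unfolding covset_def by auto
      show ?thesis
      proof (cases "A \<in> set (take (i-1) L)")
        case True
        hence "take (i-1) L \<noteq> []" by auto
        hence "0 < i - 1" by auto
        moreover have "tau \<in> cov (take (i-1) L)"
          using True A tc unfolding covset_def by auto
        ultimately show ?thesis unfolding s_def by auto
      next
        case False
        hence "A = L!(i-1)" using A tk by auto
        hence "(L!(i-1)) p = w" using A that(3) unfolding covers_def by auto
        thus ?thesis using that Ta_Sigma unfolding s_def by auto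
      qed
    qed
  qed
  have hc: "s (C N tau) \<longrightarrow> \<not> s (C 0 tau)" for tau
    using len unfolding s_def by auto
  have hCC: "\<not> s (C (i - 1) tau) \<longrightarrow> s (U i)" if "i \<in> {lb+2..N}" "tau \<in> Ta" for i tau
  proof
    assume nc: "\<not> s (C (i - 1) tau)"
    show "s (U i)"
    proof (rule ccontr)
      assume "\<not> s (U i)"
      hence ci: "can < i" unfolding s_def by auto
      hence "can \<le> N" using that by auto
      hence "tau \<in> cov (take can L)" using full that by auto
      moreover have "cov (take can L) \<subseteq> cov (take (i-1) L)"
        using ci by (intro covset_mono set_take_subset_set_take) auto
      ultimately have "s (C (i - 1) tau)" using that unfolding s_def by auto
      thus False using nc by simp
    qed
  qed
  have hard: "\<forall>h\<in>Psi_hard P d phi t N lb. h s"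
    unfolding Psi_hard_def
    apply (intro ballI)
    apply (elim UnE CollectE exE conjE)
    using hX hS ha hc hCC by (auto simp: s_def)
  have c1: "{i\<in>{lb+2..N}. s (U i)} = {lb+2..min N can}" unfolding s_def by auto
  have c2: "{tau\<in>Ta. \<not> s (C N tau)} = Ta - cov L" using len N1 unfolding s_def by auto
  have "card (Ta - cov L) = card Ta - card (cov L)"
    using covset_sub[OF sub] fin_Ta by (simp add: card_Diff_subset finite_subset)
  hence "costf N lb s = min N can - (lb+1) + (N - (lb+1) + 1) * (card Ta - TN N)"
    unfolding costf_def cost_eq c1 c2 cardL by simp
  thus ?thesis using hard by blast
qed


lemma lower:
  assumes N1: "1 \<le> N" and lbc: "lb < can" and lbN: "lb + 1 \<le> N"
    and hs: "\<forall>h\<in>Psi_hard P d phi t N lb. h s"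
  shows "min N can - (lb+1) + (N - (lb+1) + 1) * (card Ta - TN N) \<le> costf N lb s"
proof -
  have hX: "\<exists>!v. v \<in> d p \<and> s (X i p v)" if "i \<in> {1..N}" "p \<in> P" for i p
  proof -
    have "(\<lambda>s. \<exists>!v. v \<in> d p \<and> s (X i p v)) \<in> Psi_hard P d phi t N lb"
      unfolding Psi_hard_def apply (rule UnI1)+ using that by blast
    from bspec[OF hs this] show ?thesis by simp
  qed
  have hS: "peval (\<lambda>(p, v). s (X i p v)) phi" if "i \<in> {1..N}" for i
  proof -
    have "(\<lambda>s. peval (\<lambda>(p, v). s (X i p v)) phi) \<in> Psi_hard P d phi t N lb"
      unfolding Psi_hard_def apply (rule UnI1, rule UnI1, rule UnI1, rule UnI1, rule UnI2) using that by blast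
    from bspec[OF hs this] show ?thesis by simp
  qed
  have ha: "s (C i tau) \<longrightarrow> s (C (i - 1) tau) \<or> s (X i p v)"
    if "i \<in> {1..N}" "tau \<in> Ta" "(p, v) \<in> tau" for i tau p v
  proof -
    have "(\<lambda>s. s (C i tau) \<longrightarrow> s (C (i - 1) tau) \<or> s (X i p v)) \<in> Psi_hard P d phi t N lb"
      unfolding Psi_hard_def apply (rule UnI1, rule UnI1, rule UnI1, rule UnI2) using that by blast
    from bspec[OF hs this] show ?thesis by simp
  qed
  have hc: "s (C N tau) \<longrightarrow> \<not> s (C 0 tau)" if "tau \<in> Ta" for tau
  proof -
    have "(\<lambda>s. s (C N tau) \<longrightarrow> \<not> s (C 0 tau)) \<in> Psi_hard P d phi t N lb"
      unfolding Psi_hard_def apply (rule UnI1, rule UnI1, rule UnI2) using that by blast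
    from bspec[OF hs this] show ?thesis by simp
  qed
  have hCC: "\<not> s (C (i - 1) tau) \<longrightarrow> s (U i)" if "i \<in> {lb+2..N}" "tau \<in> Ta" for i tau
  proof -
    have "(\<lambda>s. \<not> s (C (i - 1) tau) \<longrightarrow> s (U i)) \<in> Psi_hard P d phi t N lb"
      unfolding Psi_hard_def apply (rule UnI2) using that by blast
    from bspec[OF hs this] show ?thesis by simp
  qed
  define row where "row i = (\<lambda>p. if p \<in> P then (THE v. v \<in> d p \<and> s (X i p v)) else undefined)" for i
  have row_in: "row i p \<in> d p \<and> s (X i p (row i p))" if "i \<in> {1..N}" "p \<in> P" for i p
    using theI'[OF hX[OF that]] that unfolding row_def by simp
  have row_iff: "row i p = v \<longleftrightarrow> s (X i p v)" if "i \<in> {1..N}" "p \<in> P" "v \<in> d p" for i p v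
    using row_in[OF that(1,2)] hX[OF that(1,2)] that(3) by blast
  have row_TC: "row i \<in> TC" if "i \<in> {1..N}" for i
  proof -
    have "row i \<in> PiE P d" using row_in[OF that] unfolding row_def PiE_def extensional_def
      by (auto simp: Pi_def)
    moreover have "peval (\<lambda>(p, v). row i p = v) phi = peval (\<lambda>(p, v). s (X i p v)) phi"
    proof (rule peval_cong, intro ballI)
      fix a assume a: "a \<in> set_pform phi"
      obtain p v where pv: "a = (p, v)" by (cases a)
      have "p \<in> P" "v \<in> d p" using atoms_sub[OF a] pv by auto
      thus "(case a of (p, v) \<Rightarrow> row i p = v) = (case a of (p, v) \<Rightarrow> s (X i p v))"
        using row_iff[OF that] pv by simp
    qed
    ultimately show ?thesis using hS[OF that] unfolding test_cases_def by auto
  qed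
  define Lj where "Lj j = map row [1..<j+1]" for j
  have Lj_len: "length (Lj j) = j" for j unfolding Lj_def by simp
  have Lj_set: "set (Lj j) = row ` {1..j}" for j unfolding Lj_def by auto
  have Lj_TC: "set (Lj j) \<subseteq> TC" if "j \<le> N" for j using row_TC that unfolding Lj_set by auto
  have chain: "tau \<in> cov (Lj i)" if "tau \<in> Ta" "\<not> s (C 0 tau)" "i \<le> N" "s (C i tau)" for tau i
    using that(3,4)
  proof (induction i)
    case 0 thus ?case using that(2) by simp
  next
    case (Suc i)
    show ?case
    proof (cases "s (C i tau)")
      case True
      hence "tau \<in> cov (Lj i)" using Suc by simp
      moreover have "cov (Lj i) \<subseteq> cov (Lj (Suc i))" unfolding Lj_set
        by (rule covset_mono) (auto simp: Lj_set)
      ultimately show ?thesis by blast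
    next
      case False
      have Xall: "s (X (Suc i) p v)" if "(p, v) \<in> tau" for p v
      proof -
        have "Suc i \<in> {1..N}" using Suc.prems by simp
        from ha[OF this \<open>tau \<in> Ta\<close> that] Suc.prems(2) False show ?thesis by simp
      qed
      have "covers (row (Suc i)) tau" unfolding covers_def
      proof (intro ballI, clarify)
        fix p v assume pv: "(p, v) \<in> tau"
        have pP: "p \<in> P" "v \<in> d p" using Ta_Sigma[OF \<open>tau \<in> Ta\<close> pv] by auto
        have "Suc i \<in> {1..N}" using Suc.prems by simp
        from row_iff[OF this pP] Xall[OF pv] show "row (Suc i) p = v" by simp
      qed
      moreover have "row (Suc i) \<in> set (Lj (Suc i))" unfolding Lj_set by auto
      ultimately show ?thesis unfolding covset_def using Ta_tuple[OF \<open>tau \<in> Ta\<close>] by blast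
    qed
  qed
  define K where "K = {tau\<in>Ta. s (C N tau)}"
  define M where "M = N - (lb + 1) + 1"
  define uc where "uc = card {i\<in>{lb+2..N}. s (U i)}"
  have KTa: "K \<subseteq> Ta" unfolding K_def by auto
  have nk: "card {tau\<in>Ta. \<not> s (C N tau)} = card Ta - card K"
  proof -
    have "{tau\<in>Ta. \<not> s (C N tau)} = Ta - K" unfolding K_def by auto
    thus ?thesis using KTa fin_Ta by (simp add: card_Diff_subset finite_subset)
  qed
  have cost: "costf N lb s = uc + M * (card Ta - card K)"
    unfolding costf_def cost_eq nk uc_def M_def ..
  have TNle: "TN N \<le> card Ta" by (rule L4)
  have cardK: "card K \<le> card (cov (Lj j))" if "K \<subseteq> cov (Lj j)" "j \<le> N" for j
    using that covset_sub[OF Lj_TC[OF that(2)]] fin_Ta by (meson card_mono finite_subset)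
  show ?thesis
  proof (cases "\<forall>i\<in>{lb+2..N}. s (U i)")
    case True
    hence "{i\<in>{lb+2..N}. s (U i)} = {lb+2..N}" by auto
    hence ucv: "uc = N - (lb + 1)" unfolding uc_def by simp
    have "K \<subseteq> cov (Lj N)"
    proof
      fix tau assume "tau \<in> K"
      hence tK: "tau \<in> Ta" "s (C N tau)" unfolding K_def by auto
      with hc[OF tK(1)] show "tau \<in> cov (Lj N)" using chain[of tau N] by blast
    qed
    hence "card K \<le> TN N" using cardK[of N] L1[OF Lj_len Lj_TC] by fastforce
    hence "card Ta - TN N \<le> card Ta - card K" by arith
    hence "M * (card Ta - TN N) \<le> M * (card Ta - card K)" by (rule mult_le_mono2)
    moreover have "min N can - (lb + 1) \<le> uc" using ucv by simp
    ultimately show ?thesis unfolding cost M_def[symmetric] by linarith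
  next
    case False
    define i0 where "i0 = (LEAST i. i \<in> {lb+2..N} \<and> \<not> s (U i))"
    have ex: "\<exists>i. i \<in> {lb+2..N} \<and> \<not> s (U i)" using False by blast
    have i0: "i0 \<in> {lb+2..N}" "\<not> s (U i0)" using LeastI_ex[OF ex] unfolding i0_def by auto
    have i0min: "s (U i)" if "i \<in> {lb+2..N}" "i < i0" for i
      using not_less_Least[of i "\<lambda>i. i \<in> {lb+2..N} \<and> \<not> s (U i)"] that unfolding i0_def by auto
    define j where "j = i0 - 1"
    have jN: "j < N" "lb + 1 \<le> j" using i0 unfolding j_def by auto
    have "{lb+2..j} \<subseteq> {i\<in>{lb+2..N}. s (U i)}" using i0min jN unfolding j_def by auto
    hence "card {lb+2..j} \<le> uc" unfolding uc_def by (intro card_mono) auto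
    hence ucj: "j - (lb + 1) \<le> uc" by simp
    have "s (C j tau)" if "tau \<in> Ta" for tau using hCC[OF i0(1) that] i0(2) unfolding j_def by auto
    hence Cj: "s (C j tau)" if "tau \<in> Ta" for tau using that .
    have Ksub: "K \<subseteq> cov (Lj j)"
    proof
      fix tau assume "tau \<in> K"
      hence tK: "tau \<in> Ta" "s (C N tau)" unfolding K_def by auto
      have "j \<le> N" using jN by simp
      with hc[OF tK(1)] tK Cj[OF tK(1)] show "tau \<in> cov (Lj j)" using chain[of tau j] by blast
    qed
    show ?thesis
    proof (cases "j < can")
      case True
      have "card (cov (Lj j)) + 1 \<le> TN N" using L2[OF Lj_len jN(1) True Lj_TC] jN by simp
      hence "card K + 1 \<le> TN N" using cardK[OF Ksub] jN by simp
      hence "card Ta - TN N + 1 \<le> card Ta - card K" using TNle by arith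
      hence "M * (card Ta - TN N + 1) \<le> M * (card Ta - card K)" by (rule mult_le_mono2)
      hence "M * (card Ta - TN N) + M \<le> M * (card Ta - card K)" by (simp add: algebra_simps)
      moreover have "min N can - (lb + 1) \<le> M" unfolding M_def by simp
      ultimately show ?thesis unfolding cost M_def[symmetric] by linarith
    next
      case False
      hence "can \<le> N" using jN by simp
      hence "TN N = card Ta" by (rule TN_full)
      thus ?thesis unfolding cost using False ucj by simp
    qed
  qed
qed

lemma main:
  assumes N1: "1 \<le> N" and lbc: "lb < can" and lbN: "lb + 1 \<le> N"
  shows "wpms_cost (Psi_hard P d phi t N lb) (Psi_soft P d phi t N lb) =
    enat (min N can - (lb+1) + (N - (lb+1) + 1) * (card Ta - TN N))"
proof -
  obtain s0 where s0: "\<forall>h\<in>Psi_hard P d phi t N lb. h s0"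
    "costf N lb s0 = min N can - (lb+1) + (N - (lb+1) + 1) * (card Ta - TN N)"
    using witness[OF assms] by blast
  have eq: "wpms_cost (Psi_hard P d phi t N lb) (Psi_soft P d phi t N lb) =
     (INF s \<in> {s. \<forall>h\<in>Psi_hard P d phi t N lb. h s}. enat (costf N lb s))"
    unfolding wpms_cost_def costf_def ..
  show ?thesis unfolding eq
  proof (rule antisym)
    show "(INF s \<in> {s. \<forall>h\<in>Psi_hard P d phi t N lb. h s}. enat (costf N lb s))
      \<le> enat (min N can - (lb+1) + (N - (lb+1) + 1) * (card Ta - TN N))"
    proof -
      have "s0 \<in> {s. \<forall>h\<in>Psi_hard P d phi t N lb. h s}" using s0(1) by simp
      from INF_lower[OF this, of "\<lambda>s. enat (costf N lb s)"] show ?thesis unfolding s0(2) .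
    qed
    show "enat (min N can - (lb+1) + (N - (lb+1) + 1) * (card Ta - TN N))
      \<le> (INF s \<in> {s. \<forall>h\<in>Psi_hard P d phi t N lb. h s}. enat (costf N lb s))"
      by (rule INF_greatest) (use lower[OF assms] in auto)
  qed
qed

end

theorem proposition12:
  fixes P :: "'p set" and d :: "'p \<Rightarrow> 'v set" and phi :: "('p \<times> 'v) pform"
    and t N lb :: nat
  assumes "sut_model P d phi"
    and "test_cases P d phi \<noteq> {}"
    and "1 \<le> t" and "t \<le> card P"
    and "1 \<le> N"
    and "lb < CAN P d phi t" and "lb + 1 \<le> N"
  shows "wpms_cost (Psi_hard P d phi t N lb) (Psi_soft P d phi t N lb) =
    (let m = N - (lb + 1);
         Ta = card (allowed_tuples P d phi t);
         TN = Tcov P d phi t N;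
         can = CAN P d phi t
     in if can \<le> N
        then enat (nat (int can - (int lb + 1) + (int Ta - int TN) * (int m + 1)))
        else enat (nat (int N - (int lb + 1) + (int Ta - int TN) * (int m + 1))))"
proof -
  interpret sutm P d phi t using assms(1,2) by unfold_locales
  have M: "wpms_cost (Psi_hard P d phi t N lb) (Psi_soft P d phi t N lb) =
    enat (min N can - (lb+1) + (N - (lb+1) + 1) * (card Ta - TN N))"
    using main assms(5,6,7) by blast
  have TNle: "TN N \<le> card Ta" by (rule L4)
  define a where "a = card Ta"
  define b where "b = TN N"
  define c where "c = can"
  have ba: "b \<le> a" using TNle unfolding a_def b_def .
  have lc: "lb + 1 \<le> c" using assms(6) unfolding c_def by simp
  have lN: "lb + 1 \<le> N" by (rule assms(7))
  obtain m where m: "N = lb + 1 + m" using lN le_Suc_ex by blast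
  obtain k where k: "c = lb + 1 + k" using lc le_Suc_ex by blast
  obtain e where e: "a = b + e" using ba le_Suc_ex by blast
  have i1: "int (c - (lb+1) + (N - (lb+1) + 1) * (a - b)) =
     int c - (int lb + 1) + (int a - int b) * (int (N - (lb + 1)) + 1)"
    unfolding m k e by (simp add: algebra_simps)
  have i2: "int (N - (lb+1) + (N - (lb+1) + 1) * (a - b)) =
     int N - (int lb + 1) + (int a - int b) * (int (N - (lb + 1)) + 1)"
    unfolding m e by (simp add: algebra_simps)
  have n1: "nat (int c - (int lb + 1) + (int a - int b) * (int (N - (lb + 1)) + 1))
     = c - (lb+1) + (N - (lb+1) + 1) * (a - b)" unfolding i1[symmetric] by (rule nat_int)
  have n2: "nat (int N - (int lb + 1) + (int a - int b) * (int (N - (lb + 1)) + 1))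
     = N - (lb+1) + (N - (lb+1) + 1) * (a - b)" unfolding i2[symmetric] by (rule nat_int)
  show ?thesis unfolding M Let_def a_def[symmetric] b_def[symmetric] c_def[symmetric] n1 n2
    by (simp add: min_def)
qed

end
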